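(* For every integer $N\ge5$, \[ h(N)>\left\lfloor\frac{\lfloor\sqrt{N}\rfloor+1}{2}\right\rfloor. \]
   Context: A finite set $A\subseteq\mathbb{Z}$ is Sidon if $a+b=c+d$ with $a,b,c,d\in A$ implies $\{a,b\}=\{c,d\}$ as unordered pairs. For a natural number $N$, $h(N)=\max\{|A| : A\subseteq\{1,\dots,N\},\ A\text{ Sidon}\}$. *)

theory Defs
  imports Complex_Main
begin

definition sidon :: "int set \<Rightarrow> bool" where
  "sidon A \<longleftrightarrow> finite A \<and>
     (\<forall>a\<in>A. \<forall>b\<in>A. \<forall>c\<in>A. \<forall>d\<in>A. a + b = c + d \<longrightarrow> {a, b} = {c, d})"

definition h :: "nat \<Rightarrow> nat" where
  "h N = Max {card A | A. A \<subseteq> {1..int N} \<and> sidon A}"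

end

theory Submission
  imports Defs "HOL-Number_Theory.Number_Theory"
begin

lemma card_filter_sum: "finite A \<Longrightarrow> card {a\<in>A. P a} = (\<Sum>a\<in>A. if P a then 1 else (0::nat))"
proof -
  assume f: "finite A"
  have "{a\<in>A. P a} = A \<inter> {a. P a}" by auto
  then show ?thesis using f by (simp add: sum.If_cases)
qed



lemma prod_primes_dvd:
  fixes S :: "nat set"
  assumes "finite S" "\<forall>p\<in>S. prime p \<and> p dvd c"
  shows "\<Prod>S dvd c"
  using assms
proof (induction S rule: finite_induct)
  case empty then show ?case by simp
next
  case (insert q F)
  have cop: "coprime q (\<Prod>F)"
    using insert by (intro prod_coprime_right) (auto intro: primes_coprime)
  have "q dvd c" "\<Prod>F dvd c" using insert by auto
  then show ?case using cop insert(1,2) by (simp add: divides_mult)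
qed

lemma pw: "(2::nat)^(2*k+1) = 2 * 4^k"
  by (simp add: power_add power_mult)
lemma binom_odd_le: "((2*k+1) choose k) \<le> (4::nat)^k"
proof -
  have sym: "(2*k+1) choose (k+1) = (2*k+1) choose k"
    using binomial_symmetric[of k "2*k+1"] by simp
  have "((2*k+1) choose k) + ((2*k+1) choose (k+1)) = (\<Sum>i\<in>{k,k+1}. (2*k+1) choose i)"
    by simp
  also have "\<dots> \<le> (\<Sum>i\<le>2*k+1. (2*k+1) choose i)"
    by (intro sum_mono2) auto
  also have "\<dots> = 2^(2*k+1)" by (rule choose_row_sum)
  also have "\<dots> = 2 * 4^k" by (rule pw)
  finally show ?thesis using sym by linarith
qed

lemma primorial_le: "\<Prod>{p::nat. prime p \<and> p \<le> x} \<le> 4^x"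
proof (induction x rule: less_induct)
  case (less x)
  consider "x \<le> 2" | "x > 2" "even x" | k where "x = 2*k+1" "k \<ge> 1"
  proof -
    assume a1: "x \<le> 2 \<Longrightarrow> thesis" and a2: "2 < x \<Longrightarrow> even x \<Longrightarrow> thesis"
      and a3: "\<And>k. x = 2 * k + 1 \<Longrightarrow> 1 \<le> k \<Longrightarrow> thesis"
    show thesis
    proof (cases "x \<le> 2")
      case True then show ?thesis by (rule a1)
    next
      case False
      show ?thesis
      proof (cases "even x")
        case True then show ?thesis using False a2 by simp
      next
        case odd: False
        then obtain k where "x = 2*k+1" by (rule oddE)
        then show ?thesis using False a3 by simp
      qed
    qed
  qed
  then show ?case
  proof cases
    case 1
    have "{p::nat. prime p \<and> p \<le> x} \<subseteq> {2}"
    proof (intro subsetI)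
      fix p assume "p \<in> {p::nat. prime p \<and> p \<le> x}"
      then have "prime p" "p \<le> x" by auto
      then have "2 \<le> p" by (simp add: prime_ge_2_nat)
      then show "p \<in> {2}" using 1 \<open>p \<le> x\<close> by simp
    qed
    then have "\<Prod>{p::nat. prime p \<and> p \<le> x} dvd \<Prod>{2::nat}"
      by (intro prod_dvd_prod_subset) auto
    then have le2: "\<Prod>{p::nat. prime p \<and> p \<le> x} \<le> 2" by (simp add: dvd_imp_le)
    show ?thesis
    proof (cases "x = 0")
      case True
      then have "{p::nat. prime p \<and> p \<le> x} = {}" by auto
      then have "\<Prod>{p::nat. prime p \<and> p \<le> x} = 1" by (simp only: prod.empty)
      then show ?thesis by simp
    next
      case False
      have "(4::nat)^1 \<le> 4^x" by (rule power_increasing) (use False in auto)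
      then show ?thesis using le2 by simp
    qed
  next
    case 2
    have np: "\<not> prime x" using 2 prime_odd_nat[of x] by auto
    have "{p::nat. prime p \<and> p \<le> x} = {p. prime p \<and> p \<le> x - 1}"
    proof (rule Collect_cong)
      fix p show "(prime p \<and> p \<le> x) = (prime p \<and> p \<le> x - 1)"
        using np by (cases "p = x") auto
    qed
    also have "\<Prod>\<dots> \<le> 4^(x-1)" using less[of "x-1"] 2 by auto
    also have "\<dots> \<le> 4^x" by (intro power_increasing) auto
    finally show ?thesis .
  next
    case 3
    define C where "C = (2*k+1) choose k"
    have split: "{p::nat. prime p \<and> p \<le> x} = {p. prime p \<and> p \<le> k+1} \<union> {p. prime p \<and> k+1 < p \<and> p \<le> 2*k+1}"
      using 3 by auto
    have fin1: "finite {p::nat. prime p \<and> p \<le> k+1}" by (rule finite_subset[of _ "{..k+1}"]) auto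
    have fin2: "finite {p::nat. prime p \<and> k+1 < p \<and> p \<le> 2*k+1}" by (rule finite_subset[of _ "{..2*k+1}"]) auto
    have "\<Prod>{p::nat. prime p \<and> p \<le> x} = \<Prod>{p::nat. prime p \<and> p \<le> k+1} * \<Prod>{p. prime p \<and> k+1 < p \<and> p \<le> 2*k+1}"
      unfolding split by (rule prod.union_disjoint[OF fin1 fin2]) auto
    also have "\<Prod>{p::nat. prime p \<and> p \<le> k+1} \<le> 4^(k+1)"
      using less[of "k+1"] 3 by auto
    also have "\<Prod>{p. prime p \<and> k+1 < p \<and> p \<le> 2*k+1} \<le> C"
    proof -
      have fl: "fact k * fact (k+1) * C = fact (2*k+1)"
        using binomial_fact_lemma[of k "2*k+1"] unfolding C_def
        by (simp add: mult_ac)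
      have "\<Prod>{p. prime p \<and> k+1 < p \<and> p \<le> 2*k+1} dvd C"
      proof (rule prod_primes_dvd[OF fin2], intro ballI conjI)
        fix p assume p: "p \<in> {p. prime p \<and> k+1 < p \<and> p \<le> 2*k+1}"
        then show "prime p" by auto
        have "p dvd fact (2*k+1)" using p prime_dvd_fact_iff[of p "2*k+1"] by auto
        then have "p dvd fact k * fact (k+1) * C" using fl by simp
        moreover have "\<not> p dvd fact k" "\<not> p dvd fact (k+1)"
          using p prime_dvd_fact_iff[of p k] prime_dvd_fact_iff[of p "k+1"] by auto
        ultimately show "p dvd C" using p by (auto simp: prime_dvd_mult_iff)
      qed
      moreover have "C > 0" unfolding C_def by simp
      ultimately show ?thesis by (simp add: dvd_imp_le)
    qed
    also have "C \<le> 4^k" unfolding C_def by (rule binom_odd_le)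
    finally have "\<Prod>{p::nat. prime p \<and> p \<le> x} \<le> 4^(k+1) * 4^k" by simp
    also have "\<dots> = 4^x" using 3 by (simp add: power_add[symmetric])
    finally show ?thesis .
  qed
qed



lemma mult_fact_sum:
  fixes p :: nat
  assumes p: "prime p" and "n < p^K"
  shows "multiplicity p (fact n) = (\<Sum>i\<in>{1..K}. n div p^i)"
  using assms(2)
proof (induction n)
  case 0 then show ?case by simp
next
  case (Suc n)
  have IH: "multiplicity p (fact n) = (\<Sum>i\<in>{1..K}. n div p^i)"
    using Suc by simp
  have nu: "\<not> is_unit p" using p not_prime_unit by blast
  have sn0: "Suc n \<noteq> 0" by simp
  define v where "v = multiplicity p (Suc n)"
  have "p ^ v dvd Suc n" unfolding v_def by (rule multiplicity_dvd)
  then have "p ^ v \<le> Suc n" by (simp add: dvd_imp_le)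
  then have "p ^ v < p ^ K" using Suc.prems by simp
  then have vK: "v < K" using power_less_imp_less_exp[of p v K] p prime_gt_1_nat by auto
  have iff: "p^i dvd Suc n \<longleftrightarrow> i \<le> v" for i
    unfolding v_def by (rule power_dvd_iff_le_multiplicity[OF sn0 nu])
  have set_eq: "{i\<in>{1..K}. p^i dvd Suc n} = {1..v}"
    using vK by (auto simp: iff)
  have step: "Suc n div p^i = n div p^i + (if p^i dvd Suc n then 1 else 0)" for i
    by (simp add: div_Suc dvd_eq_mod_eq_0)
  have "(\<Sum>i\<in>{1..K}. Suc n div p^i) = (\<Sum>i\<in>{1..K}. n div p^i) + (\<Sum>i\<in>{1..K}. (if p^i dvd Suc n then 1 else 0))"
    by (simp add: step sum.distrib)
  also have "(\<Sum>i\<in>{1..K}. (if p^i dvd Suc n then 1 else 0)) = card {i\<in>{1..K}. p^i dvd Suc n}"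
    by (rule card_filter_sum[symmetric]) simp
  also have "\<dots> = v" using set_eq by simp
  finally have eq: "(\<Sum>i\<in>{1..K}. Suc n div p^i) = (\<Sum>i\<in>{1..K}. n div p^i) + v" .
  have "multiplicity p (fact (Suc n)) = multiplicity p (Suc n * fact n)"
    by (simp add: fact_Suc)
  also have "\<dots> = v + multiplicity p (fact n)"
    unfolding v_def using p by (intro prime_elem_multiplicity_mult_distrib) auto
  finally show ?case using eq IH by simp
qed

lemma mult_central_binom:
  fixes p m :: nat
  assumes p: "prime p" and m: "m > 0"
  shows "p ^ multiplicity p ((2*m) choose m) \<le> 2*m"
proof -
  have p2: "p \<ge> 2" using p by (simp add: prime_ge_2_nat)
  obtain t where t: "p^t \<le> 2*m" "2*m < p^(t+1)"
    using ex_power_ivl1[OF p2, of "2*m"] m by auto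
  define K where "K = t+1"
  define C where "C = (2*m) choose m"
  have C0: "C \<noteq> 0" unfolding C_def by simp
  have fl: "fact m * fact m * C = fact (2*m)"
    using binomial_fact_lemma[of m "2*m"] unfolding C_def by (simp add: mult_ac)
  have m_lt: "m < p^K" using t m unfolding K_def by linarith
  have m2_lt: "2*m < p^K" using t unfolding K_def by simp
  have "multiplicity p (fact (2*m)) = multiplicity p (fact m) + multiplicity p (fact m) + multiplicity p C"
    unfolding fl[symmetric] using p C0
    by (simp add: prime_elem_multiplicity_mult_distrib)
  then have eq: "(\<Sum>i\<in>{1..K}. 2*m div p^i) = 2 * (\<Sum>i\<in>{1..K}. m div p^i) + multiplicity p C"
    using mult_fact_sum[OF p m_lt] mult_fact_sum[OF p m2_lt] by simp
  have trm: "2*m div p^i \<le> 2 * (m div p^i) + (if i \<le> t then 1 else 0)" if "i \<in> {1..K}" for i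
  proof (cases "i \<le> t")
    case True
    have q: "p^i > 0" using p2 by simp
    have "2*m < p^i * (2 * (m div p^i) + 2)"
    proof -
      have r: "m mod p^i < p^i" using q by simp
      have "p^i * (m div p^i) + m mod p^i = m" by (rule mult_div_mod_eq)
      then have "m < p^i * (m div p^i) + p^i" using r by linarith
      then have "m < p^i * (m div p^i + 1)" by (simp add: algebra_simps)
      then show ?thesis by (simp add: algebra_simps)
    qed
    then have "2*m div p^i < 2 * (m div p^i) + 2"
      using div_less_iff_less_mult[OF q, of "2*m" "2 * (m div p^i) + 2"] by (simp add: mult.commute)
    then show ?thesis using True by simp
  next
    case False
    then have "i = t+1" using that unfolding K_def by auto
    then have "2*m div p^i = 0" using t by simp
    then show ?thesis by simp
  qed
  have "(\<Sum>i\<in>{1..K}. 2*m div p^i) \<le> (\<Sum>i\<in>{1..K}. 2 * (m div p^i) + (if i \<le> t then 1 else 0))"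
    by (intro sum_mono trm)
  also have "\<dots> = 2 * (\<Sum>i\<in>{1..K}. m div p^i) + (\<Sum>i\<in>{1..K}. (if i \<le> t then 1 else 0))"
    by (simp add: sum.distrib sum_distrib_left)
  also have "(\<Sum>i\<in>{1..K}. (if i \<le> t then 1 else 0)) = (t::nat)"
  proof -
    have e: "{1..K} \<inter> {i. i \<le> t} = {1..t}" unfolding K_def by auto
    have "(\<Sum>i\<in>{1..K}. (if i \<le> t then 1 else 0)) = card ({1..K} \<inter> {i. i \<le> t})"
      by (simp only: sum.If_cases finite_atLeastAtMost) simp
    then show ?thesis unfolding e by simp
  qed
  finally have "multiplicity p C \<le> t" using eq by simp
  then have "p ^ multiplicity p C \<le> p ^ t" using p2 by (intro power_increasing) auto
  then show ?thesis using t unfolding C_def by simp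
qed

lemma ineq_j: "j \<ge> 5 \<Longrightarrow> (j+2)*(1+2^(j+2)) + 4 < (4::nat)^j"
proof (induction j rule: dec_induct)
  case base then show ?case by simp
next
  case (step j)
  have "(Suc j + 2) * (1 + 2^(Suc j + 2)) + 4 = (j+3) + 2*(j+3)*2^(j+2) + 4"
    by (simp add: algebra_simps)
  also have "\<dots> \<le> 4 * ((j+2)*(1+2^(j+2)) + 4)"
    by (simp add: algebra_simps)
  also have "\<dots> < 4 * 4^j" using step by simp
  finally show ?case by simp
qed

lemma central_lower: "m > 0 \<Longrightarrow> 4^m \<le> 2*m * ((2*m) choose m)"
proof -
  assume m: "m > 0"
  have "4^m / (2*real m) \<le> real ((2*m) choose m)" by (rule central_binomial_lower_bound[OF m])
  then have "real (4^m) \<le> real (2*m * ((2*m) choose m))" using m by (simp add: field_simps)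
  then show ?thesis by (simp only: of_nat_le_iff)
qed

lemma cheb_large:
  fixes n :: nat
  assumes n: "n \<ge> 1024"
  shows "\<exists>p. prime p \<and> n < p \<and> p \<le> 4*n - 8"
proof (rule ccontr)
  assume H: "\<not> ?thesis"
  define m where "m = 2*n - 4"
  define C where "C = (2*m) choose m"
  have m0: "m > 0" unfolding m_def using n by simp
  have C0: "C > 0" unfolding C_def by simp
  obtain j where j: "4^j \<le> n" "n < 4^(j+1)"
    using ex_power_ivl1[of 4 n] n by auto
  have j5: "j \<ge> 5"
  proof (rule ccontr)
    assume "\<not> j \<ge> 5"
    then have "j + 1 \<le> 5" by simp
    then have "(4::nat)^(j+1) \<le> 4^5" by (intro power_increasing) auto
    then show False using j n by simp
  qed
  define PF where "PF = prime_factors C"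
  have finPF: "finite PF" unfolding PF_def by simp
  have PFle: "p \<le> n" if "p \<in> PF" for p
  proof -
    have pp: "prime p" using that unfolding PF_def by auto
    have "p dvd C" using that unfolding PF_def by auto
    moreover have "C dvd fact (2*m)"
    proof -
      have "fact m * fact (2*m - m) * C = fact (2*m)"
        using binomial_fact_lemma[of m "2*m"] unfolding C_def by simp
      then show ?thesis by (metis dvd_triv_right)
    qed
    ultimately have "p dvd fact (2*m)" by (rule dvd_trans)
    then have "p \<le> 2*m" using prime_dvd_fact_iff[OF pp] by simp
    then have "p \<le> 4*n - 8" unfolding m_def by simp
    then show ?thesis using H pp by (meson not_le)
  qed
  define B where "B = (2::nat)^(j+2)"
  have B2: "B * B = 4^(j+2)" unfolding B_def by (simp add: power_mult_distrib[symmetric])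
  define S where "S = {p\<in>PF. p < B}"
  define T where "T = {p\<in>PF. \<not> p < B}"
  have "C = (\<Prod>p\<in>PF. p ^ multiplicity p C)"
    unfolding PF_def using C0 by (rule prime_factorization_nat)
  also have "\<dots> = (\<Prod>p\<in>S. p ^ multiplicity p C) * (\<Prod>p\<in>T. p ^ multiplicity p C)"
  proof -
    have e: "PF = S \<union> T" and d: "S \<inter> T = {}" unfolding S_def T_def by auto
    have fS: "finite S" "finite T" using finPF unfolding S_def T_def by auto
    show ?thesis by (subst e) (rule prod.union_disjoint[OF fS d])
  qed
  also have "(\<Prod>p\<in>S. p ^ multiplicity p C) \<le> (2*m) ^ B"
  proof -
    have "(\<Prod>p\<in>S. p ^ multiplicity p C) \<le> (2*m) ^ card S"
    proof (rule prod_le_power)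
      fix p assume "p \<in> S"
      then have "prime p" unfolding S_def PF_def by auto
      then show "0 \<le> p ^ multiplicity p C \<and> p ^ multiplicity p C \<le> 2*m"
        using mult_central_binom[OF _ m0] unfolding C_def by simp
    qed (use m0 in auto)
    also have "card S \<le> B"
    proof -
      have "S \<subseteq> {..<B}" unfolding S_def by auto
      then have "card S \<le> card {..<B}" by (intro card_mono) auto
      then show ?thesis by simp
    qed
    then have "(2*m) ^ card S \<le> (2*m) ^ B" using m0 by (intro power_increasing) auto
    finally show ?thesis .
  qed
  also have "(\<Prod>p\<in>T. p ^ multiplicity p C) \<le> 4^n"
  proof -
    have "(\<Prod>p\<in>T. p ^ multiplicity p C) \<le> (\<Prod>p\<in>T. p)"
    proof (rule prod_mono, intro conjI)
      fix p assume pT: "p \<in> T"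
      then have pp: "prime p" and pB: "B \<le> p" unfolding T_def PF_def by auto
      have "p ^ multiplicity p C \<le> 2*m"
        using mult_central_binom[OF pp m0] unfolding C_def by simp
      also have "2*m < 4^(j+2)" using j unfolding m_def by simp
      also have "4^(j+2) = B*B" using B2 by simp
      also have "\<dots> \<le> p*p" using pB by (intro mult_mono) auto
      also have "\<dots> = p^2" by (simp add: power2_eq_square)
      finally have "p ^ multiplicity p C < p^2" .
      then have "multiplicity p C < 2"
        using power_less_imp_less_exp[of p] pp prime_gt_1_nat by blast
      then have "multiplicity p C \<le> 1" by simp
      moreover have "1 \<le> p" using pp prime_gt_1_nat[of p] by simp
      ultimately have "p ^ multiplicity p C \<le> p^1"
        by (intro power_increasing) auto
      then show "p ^ multiplicity p C \<le> p" by simp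
    qed simp
    also have "(\<Prod>p\<in>T. p) \<le> \<Prod>{p::nat. prime p \<and> p \<le> n}"
    proof -
      have "T \<subseteq> {p::nat. prime p \<and> p \<le> n}"
        using PFle unfolding T_def PF_def by auto
      then have "(\<Prod>p\<in>T. p) dvd \<Prod>{p::nat. prime p \<and> p \<le> n}"
        by (intro prod_dvd_prod_subset) (auto intro: finite_subset[of _ "{..n}"])
      moreover have "\<Prod>{p::nat. prime p \<and> p \<le> n} > 0"
        by (intro prod_pos) (auto simp: prime_gt_0_nat)
      ultimately show ?thesis by (simp add: dvd_imp_le)
    qed
    also have "\<dots> \<le> 4^n" by (rule primorial_le)
    finally show ?thesis .
  qed
  finally have Cle: "C \<le> (2*m)^B * 4^n" by simp
  have "4^m \<le> 2*m * C" unfolding C_def by (rule central_lower[OF m0])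
  also have "\<dots> \<le> (2*m) * ((2*m)^B * 4^n)" using Cle by simp
  also have "\<dots> = (2*m)^(B+1) * 4^n" by (simp add: algebra_simps)
  also have "(2*m)^(B+1) \<le> (4^(j+2))^(B+1)"
  proof -
    have "2*m \<le> 4^(j+2)" using j unfolding m_def by simp
    then show ?thesis by (rule power_mono) simp
  qed
  also have "((4::nat)^(j+2))^(B+1) * 4^n = 4^((j+2)*(B+1) + n)"
    by (simp only: power_mult power_add)
  finally have "(4::nat)^m \<le> 4^((j+2)*(B+1) + n)" by simp
  then have "m \<le> (j+2)*(B+1) + n"
    using power_le_imp_le_exp[of "4::nat" m "(j+2)*(B+1) + n"] by linarith
  then have "n \<le> (j+2)*(1+B) + 4" unfolding m_def by simp
  moreover have "(j+2)*(1+B) + 4 < 4^j" unfolding B_def by (rule ineq_j[OF j5])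
  ultimately show False using j by simp
qed

lemma prime_range:
  fixes n :: nat
  assumes n: "n \<ge> 4"
  shows "\<exists>p. prime p \<and> n < p \<and> p \<le> 4*n - 8"
proof -
  have w: "\<exists>p. prime p \<and> n < p \<and> p \<le> 4*n - 8" if "prime q" "n < q" "q + 8 \<le> 4*n" for q
    using that by (intro exI[of _ q]) auto
  have p5: "prime (5::nat)" by code_simp
  have p11: "prime (11::nat)" by code_simp
  have p31: "prime (31::nat)" by code_simp
  have p113: "prime (113::nat)" by code_simp
  have p443: "prime (443::nat)" by code_simp
  have p1031: "prime (1031::nat)" by code_simp
  show ?thesis
  proof -
    consider "n = 4" | "5 \<le> n \<and> n \<le> 10" | "11 \<le> n \<and> n \<le> 30" | "31 \<le> n \<and> n \<le> 112"
      | "113 \<le> n \<and> n \<le> 442" | "443 \<le> n \<and> n \<le> 1023" | "1024 \<le> n" using n by linarith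
    then show ?thesis
    proof cases
      case 1 then show ?thesis using w[OF p5] by simp
    next
      case 2 then show ?thesis using w[OF p11] by simp
    next
      case 3 then show ?thesis using w[OF p31] by simp
    next
      case 4 then show ?thesis using w[OF p113] by simp
    next
      case 5 then show ?thesis using w[OF p443] by simp
    next
      case 6 then show ?thesis using w[OF p1031] by simp
    next
      case 7 then show ?thesis by (rule cheb_large)
    qed
  qed
qed


lemma field_pair:
  fixes P a b c d :: int
  assumes P: "prime P" and s: "[a + b = c + d] (mod P)" and m: "[a * b = c * d] (mod P)"
  shows "[a = c] (mod P) \<or> [a = d] (mod P)"
proof -
  have d1: "P dvd (a + b) - (c + d)" using s by (simp add: cong_iff_dvd_diff)
  have d2: "P dvd a * b - c * d" using m by (simp add: cong_iff_dvd_diff)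
  have "(a - c) * (a - d) = a * ((a + b) - (c + d)) - (a * b - c * d)"
    by (simp add: algebra_simps)
  then have "P dvd (a - c) * (a - d)" using d1 d2 by simp
  then have "P dvd (a - c) \<or> P dvd (a - d)" using P by (simp add: prime_dvd_mult_iff)
  then show ?thesis by (simp add: cong_iff_dvd_diff)
qed

lemma ruzsa:
  fixes p :: nat
  assumes p: "prime p" and p3: "p \<ge> 3"
  shows "\<exists>A::nat set. A \<subseteq> {..<p*(p-1)} \<and> card A = p-1 \<and>
    (\<forall>a\<in>A. \<forall>b\<in>A. \<forall>c\<in>A. \<forall>d\<in>A. (a+b) mod (p*(p-1)) = (c+d) mod (p*(p-1)) \<longrightarrow> {a,b} = {c,d})"
proof -
  define q where "q = p - 1"
  define M where "M = p * q"
  have q0: "q > 0" unfolding q_def using p3 by simp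
  have pq: "p = q + 1" unfolding q_def using p3 by simp
  obtain g where g: "residue_primroot p g"
    using prime_primitive_root_exists[of p] p p3 by auto
  have cop: "coprime p g" and ordg: "ord p g = q"
    using g p unfolding residue_primroot_def q_def by (auto simp: totient_prime)
  define x where "x i = (i*p + q*q*(g^i mod p)) mod M" for i
  have qdvd: "q dvd M" and pdvd: "p dvd M" unfolding M_def by auto
  have xq: "[x i = i] (mod q)" for i
  proof -
    have "[x i = i*p + q*q*(g^i mod p)] (mod M)" unfolding x_def by simp
    then have "[x i = i*p + q*q*(g^i mod p)] (mod q)" using qdvd by (rule cong_dvd_modulus_nat)
    moreover have "[i*p + q*q*(g^i mod p) = i] (mod q)"
    proof -
      have "i*p + q*q*(g^i mod p) = i + q * (i + q*(g^i mod p))" unfolding pq by (simp add: algebra_simps)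
      then show ?thesis by (simp add: cong_def)
    qed
    ultimately show ?thesis by (rule cong_trans)
  qed
  have xp: "[x i = g^i] (mod p)" for i
  proof -
    have "[x i = i*p + q*q*(g^i mod p)] (mod M)" unfolding x_def by simp
    then have "[x i = i*p + q*q*(g^i mod p)] (mod p)" using pdvd by (rule cong_dvd_modulus_nat)
    moreover have "[i*p + q*q*(g^i mod p) = g^i] (mod p)"
    proof -
      have qq: "q*q = p*(p-2) + 1" unfolding q_def using p3
        by (cases p) (auto simp: algebra_simps)
      have "i*p + q*q*(g^i mod p) = (g^i mod p) + p * (i + (p-2)*(g^i mod p))"
        unfolding qq by (simp add: algebra_simps)
      then show ?thesis by (simp add: cong_def)
    qed
    ultimately show ?thesis by (rule cong_trans)
  qed
  have xmodq: "x i mod q = i" if "i < q" for i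
    using xq[of i] that by (simp add: cong_def)
  have xM: "x i < M" for i unfolding x_def M_def using q0 p3 by simp
  define A where "A = x ` {..<q}"
  have inj: "inj_on x {..<q}"
    by (rule inj_onI) (metis lessThan_iff xmodq)
  have cardA: "card A = q" unfolding A_def using inj by (simp add: card_image)
  have sub: "A \<subseteq> {..<M}" unfolding A_def using xM by auto
  have idx: "i1 = i3" if i: "i1 < q" "i3 < q" and c: "[g^i1 = g^i3] (mod p)" for i1 i3
  proof -
    have "[i1 = i3] (mod q)" using c order_divides_expdiff[OF cop] ordg by simp
    then show ?thesis using i by (simp add: cong_def)
  qed
  have sidon: "{x i1, x i2} = {x i3, x i4}"
    if i: "i1 < q" "i2 < q" "i3 < q" "i4 < q" and e: "(x i1 + x i2) mod M = (x i3 + x i4) mod M"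
    for i1 i2 i3 i4
  proof -
    have cM: "[x i1 + x i2 = x i3 + x i4] (mod M)" using e by (simp add: cong_def)
    have cq: "[i1 + i2 = i3 + i4] (mod q)"
    proof -
      have "[i1 + i2 = x i1 + x i2] (mod q)" using xq by (intro cong_add) (auto intro: cong_sym)
      also have "[x i1 + x i2 = x i3 + x i4] (mod q)" using cM qdvd by (rule cong_dvd_modulus_nat)
      also have "[x i3 + x i4 = i3 + i4] (mod q)" using xq by (intro cong_add)
      finally show ?thesis .
    qed
    have cp: "[g^i1 + g^i2 = g^i3 + g^i4] (mod p)"
    proof -
      have "[g^i1 + g^i2 = x i1 + x i2] (mod p)" using xp by (intro cong_add) (auto intro: cong_sym)
      also have "[x i1 + x i2 = x i3 + x i4] (mod p)" using cM pdvd by (rule cong_dvd_modulus_nat)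
      also have "[x i3 + x i4 = g^i3 + g^i4] (mod p)" using xp by (intro cong_add)
      finally show ?thesis .
    qed
    have cm: "[g^i1 * g^i2 = g^i3 * g^i4] (mod p)"
      using cq order_divides_expdiff[OF cop, of "i1+i2" "i3+i4"] ordg by (simp add: power_add)
    have cpi: "[int (g^i1) + int (g^i2) = int (g^i3) + int (g^i4)] (mod int p)"
      using cp by (simp add: cong_int_iff[symmetric])
    have cmi: "[int (g^i1) * int (g^i2) = int (g^i3) * int (g^i4)] (mod int p)"
      using cm by (simp add: cong_int_iff[symmetric])
    have "[int (g^i1) = int (g^i3)] (mod int p) \<or> [int (g^i1) = int (g^i4)] (mod int p)"
      using field_pair[OF _ cpi cmi] p by simp
    then have "[g^i1 = g^i3] (mod p) \<or> [g^i1 = g^i4] (mod p)" by (simp only: cong_int_iff)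
    then show ?thesis
    proof
      assume "[g^i1 = g^i3] (mod p)"
      then have "i1 = i3" using idx i by simp
      then have "[i2 = i4] (mod q)" using cq by (simp add: cong_add_lcancel_nat)
      then have "i2 = i4" using i by (simp add: cong_def)
      then show ?thesis using \<open>i1 = i3\<close> by simp
    next
      assume "[g^i1 = g^i4] (mod p)"
      then have "i1 = i4" using idx i by simp
      then have "[i4 + i2 = i4 + i3] (mod q)" using cq \<open>i1 = i4\<close> by (simp add: ac_simps)
      then have "[i2 = i3] (mod q)" by (simp add: cong_add_lcancel_nat)
      then have "i2 = i3" using i by (simp add: cong_def)
      then show ?thesis using \<open>i1 = i4\<close> by auto
    qed
  qed
  show ?thesis
  proof (intro exI[of _ A] conjI ballI impI)
    show "A \<subseteq> {..<p*(p-1)}" using sub unfolding M_def q_def .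
    show "card A = p - 1" using cardA unfolding q_def .
    fix a b c d assume "a \<in> A" "b \<in> A" "c \<in> A" "d \<in> A"
      and e: "(a + b) mod (p * (p - 1)) = (c + d) mod (p * (p - 1))"
    note mems = \<open>a \<in> A\<close> \<open>b \<in> A\<close> \<open>c \<in> A\<close> \<open>d \<in> A\<close>
    obtain i1 where i1: "i1 < q" "a = x i1" using mems(1) unfolding A_def by blast
    obtain i2 where i2: "i2 < q" "b = x i2" using mems(2) unfolding A_def by blast
    obtain i3 where i3: "i3 < q" "c = x i3" using mems(3) unfolding A_def by blast
    obtain i4 where i4: "i4 < q" "d = x i4" using mems(4) unfolding A_def by blast
    have "(x i1 + x i2) mod M = (x i3 + x i4) mod M"
      using e i1 i2 i3 i4 unfolding M_def q_def by simp
    then have "{x i1, x i2} = {x i3, x i4}" by (rule sidon[OF i1(1) i2(1) i3(1) i4(1)])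
    then show "{a, b} = {c, d}" using i1 i2 i3 i4 by simp
  qed
qed

lemma window:
  fixes A :: "int set" and M L k :: nat
  assumes sub: "A \<subseteq> {0..<int M}"
    and cyc: "\<forall>a\<in>A. \<forall>b\<in>A. \<forall>c\<in>A. \<forall>d\<in>A. (a+b) mod int M = (c+d) mod int M \<longrightarrow> {a,b} = {c,d}"
    and L: "L \<le> M" and big: "card A * L > M * k"
  shows "\<exists>B. B \<subseteq> {1..int L} \<and> sidon B \<and> card B \<ge> k+1"
proof -
  have M0: "M > 0" using big L by (cases "M = 0") auto
  have finA: "finite A" using sub by (rule finite_subset) simp
  define W where "W = {0..<int M}"
  define P where "P a w \<longleftrightarrow> (a - w) mod int M < int L" for a w
  define f where "f w = card {a\<in>A. P a w}" for w
  have bk: "((a - w) mod int M + w) mod int M = a" if "a \<in> A" for a w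
  proof -
    have "((a - w) mod int M + w) mod int M = ((a - w) + w) mod int M" by (simp add: mod_add_left_eq)
    also have "\<dots> = a" using sub that by auto
    finally show ?thesis .
  qed
  have inner: "card {w\<in>W. P a w} = L" for a
  proof -
    have "bij_betw (\<lambda>w. (a - w) mod int M) {w\<in>W. P a w} {0..<int L}"
    proof (rule bij_betw_byWitness[where f' = "\<lambda>t. (a - t) mod int M"])
      show "\<forall>w\<in>{w\<in>W. P a w}. (a - (a - w) mod int M) mod int M = w"
      proof
        fix w assume "w \<in> {w\<in>W. P a w}"
        then have "0 \<le> w" "w < int M" unfolding W_def by auto
        moreover have "(a - (a - w) mod int M) mod int M = (a - (a - w)) mod int M"
          by (simp add: mod_diff_right_eq)
        ultimately show "(a - (a - w) mod int M) mod int M = w" by simp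
      qed
      show "\<forall>t\<in>{0..<int L}. (a - (a - t) mod int M) mod int M = t"
      proof
        fix t assume "t \<in> {0..<int L}"
        then have "0 \<le> t" "t < int M" using L by auto
        moreover have "(a - (a - t) mod int M) mod int M = (a - (a - t)) mod int M"
          by (simp add: mod_diff_right_eq)
        ultimately show "(a - (a - t) mod int M) mod int M = t" by simp
      qed
      show "(\<lambda>w. (a - w) mod int M) ` {w\<in>W. P a w} \<subseteq> {0..<int L}"
        unfolding P_def using M0 by auto
      show "(\<lambda>t. (a - t) mod int M) ` {0..<int L} \<subseteq> {w\<in>W. P a w}"
      proof
        fix w assume "w \<in> (\<lambda>t. (a - t) mod int M) ` {0..<int L}"
        then obtain t where t: "t \<in> {0..<int L}" "w = (a - t) mod int M" by auto
        have "0 \<le> t" "t < int M" using t L by auto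
        have "(a - w) mod int M = (a - (a - t)) mod int M" using t by (simp add: mod_diff_right_eq)
        also have "\<dots> = t" using \<open>0 \<le> t\<close> \<open>t < int M\<close> by simp
        finally have "P a w" unfolding P_def using t by simp
        moreover have "w \<in> W" unfolding W_def t using M0 by simp
        ultimately show "w \<in> {w\<in>W. P a w}" by simp
      qed
    qed
    then have "card {w\<in>W. P a w} = card {0..<int L}" by (rule bij_betw_same_card)
    then show ?thesis by simp
  qed
  have finW: "finite W" unfolding W_def by simp
  have "(\<Sum>w\<in>W. f w) = (\<Sum>w\<in>W. \<Sum>a\<in>A. if P a w then 1 else (0::nat))"
    unfolding f_def using finA by (simp add: card_filter_sum)
  also have "\<dots> = (\<Sum>a\<in>A. \<Sum>w\<in>W. if P a w then 1 else (0::nat))" by (rule sum.swap)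
  also have "\<dots> = (\<Sum>a\<in>A. L)"
  proof (rule sum.cong[OF refl])
    fix a show "(\<Sum>w\<in>W. if P a w then 1 else (0::nat)) = L"
      using inner[of a] finW by (simp add: card_filter_sum)
  qed
  also have "\<dots> = card A * L" by simp
  finally have sumf: "(\<Sum>w\<in>W. f w) = card A * L" .
  have "\<exists>w\<in>W. f w \<ge> k + 1"
  proof (rule ccontr)
    assume "\<not> ?thesis"
    then have "\<forall>w\<in>W. f w \<le> k" by auto
    then have "(\<Sum>w\<in>W. f w) \<le> (\<Sum>w\<in>W. k)" by (intro sum_mono) auto
    then have "(\<Sum>w\<in>W. f w) \<le> card W * k" by simp
    then show False using sumf big unfolding W_def by simp
  qed
  then obtain w where w: "w \<in> W" "f w \<ge> k + 1" by blast
  define A' where "A' = {a\<in>A. P a w}"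
  define \<phi> where "\<phi> a = (a - w) mod int M + 1" for a
  define B where "B = \<phi> ` A'"
  have injphi: "inj_on \<phi> A'"
  proof (rule inj_onI)
    fix a1 a2 assume a: "a1 \<in> A'" "a2 \<in> A'" "\<phi> a1 = \<phi> a2"
    then have "(a1 - w) mod int M = (a2 - w) mod int M" unfolding \<phi>_def by simp
    moreover have "a1 \<in> A" "a2 \<in> A" using a(1,2) unfolding A'_def by auto
    ultimately show "a1 = a2" using bk[of a1 w] bk[of a2 w] by metis
  qed
  have cardB: "card B = f w" unfolding B_def f_def A'_def[symmetric]
    using injphi by (simp add: card_image)
  have subB: "B \<subseteq> {1..int L}"
  proof
    fix b assume "b \<in> B"
    then obtain a where "a \<in> A'" "b = \<phi> a" unfolding B_def by auto
    then show "b \<in> {1..int L}" unfolding A'_def P_def \<phi>_def using M0 by auto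
  qed
  have key: "a mod int M = (\<phi> a - 1 + w) mod int M" if "a \<in> A" for a
  proof -
    have "a mod int M = a" using sub that by auto
    then show ?thesis using bk[OF that, of w] unfolding \<phi>_def by simp
  qed
  have sidB: "sidon B"
    unfolding sidon_def
  proof (intro conjI ballI impI)
    show "finite B" unfolding B_def A'_def using finA by simp
    fix b1 b2 b3 b4 assume bs: "b1 \<in> B" "b2 \<in> B" "b3 \<in> B" "b4 \<in> B" and e: "b1 + b2 = b3 + b4"
    obtain a1 where a1: "a1 \<in> A'" "b1 = \<phi> a1" using bs(1) unfolding B_def by auto
    obtain a2 where a2: "a2 \<in> A'" "b2 = \<phi> a2" using bs(2) unfolding B_def by auto
    obtain a3 where a3: "a3 \<in> A'" "b3 = \<phi> a3" using bs(3) unfolding B_def by auto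
    obtain a4 where a4: "a4 \<in> A'" "b4 = \<phi> a4" using bs(4) unfolding B_def by auto
    have inA: "a1 \<in> A" "a2 \<in> A" "a3 \<in> A" "a4 \<in> A" using a1 a2 a3 a4 unfolding A'_def by auto
    have "(a1 + a2) mod int M = ((\<phi> a1 - 1 + w) + (\<phi> a2 - 1 + w)) mod int M"
      using key[OF inA(1)] key[OF inA(2)] by (metis mod_add_cong)
    also have "\<dots> = ((b1 + b2) + (2*w - 2)) mod int M" using a1 a2 by (simp add: algebra_simps)
    also have "\<dots> = ((b3 + b4) + (2*w - 2)) mod int M" using e by simp
    also have "\<dots> = ((\<phi> a3 - 1 + w) + (\<phi> a4 - 1 + w)) mod int M" using a3 a4 by (simp add: algebra_simps)
    also have "\<dots> = (a3 + a4) mod int M"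
      using key[OF inA(3)] key[OF inA(4)] by (metis mod_add_cong)
    finally have "{a1, a2} = {a3, a4}" using cyc inA by blast
    then have "{\<phi> a1, \<phi> a2} = {\<phi> a3, \<phi> a4}" by (metis image_insert image_empty)
    then show "{b1, b2} = {b3, b4}" using a1 a2 a3 a4 by simp
  qed
  show ?thesis using subB sidB cardB w by auto
qed


lemma h_ge:
  assumes "B \<subseteq> {1..int N}" "sidon B"
  shows "card B \<le> h N"
proof -
  have fin: "finite {card A | A. A \<subseteq> {1..int N} \<and> sidon A}"
  proof -
    have "{card A | A. A \<subseteq> {1..int N} \<and> sidon A} \<subseteq> card ` Pow {1..int N}" by auto
    then show ?thesis by (rule finite_subset) simp
  qed
  have "card B \<in> {card A | A. A \<subseteq> {1..int N} \<and> sidon A}" using assms by auto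
  then show ?thesis unfolding h_def using fin by (rule Max_ge[rotated])
qed

lemma sidon_12: "sidon {1, 2}"
  unfolding sidon_def by auto

lemma sidon_124: "sidon {1, 2, 4}"
  unfolding sidon_def by auto

lemma big_case:
  fixes N k :: nat
  assumes k3: "k \<ge> 3" and sq: "(2*k - 1)^2 \<le> N"
  shows "\<exists>B. B \<subseteq> {1..int N} \<and> sidon B \<and> card B \<ge> k + 1"
proof -
  obtain p where p: "prime p" "k + 1 < p" "p \<le> 4*(k+1) - 8"
    using prime_range[of "k+1"] k3 by auto
  have p3: "p \<ge> 3" using p k3 by simp
  define M where "M = p * (p - 1)"
  obtain A0 where A0: "A0 \<subseteq> {..<M}" "card A0 = p - 1"
    "\<forall>a\<in>A0. \<forall>b\<in>A0. \<forall>c\<in>A0. \<forall>d\<in>A0. (a+b) mod M = (c+d) mod M \<longrightarrow> {a,b} = {c,d}"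
    using ruzsa[OF p(1) p3] unfolding M_def by blast
  define A where "A = int ` A0"
  have subA: "A \<subseteq> {0..<int M}" using A0(1) unfolding A_def by auto
  have cardA: "card A = p - 1" unfolding A_def using A0(2) by (simp add: card_image)
  have cyc: "\<forall>a\<in>A. \<forall>b\<in>A. \<forall>c\<in>A. \<forall>d\<in>A. (a+b) mod int M = (c+d) mod int M \<longrightarrow> {a,b} = {c,d}"
  proof (intro ballI impI)
    fix a b c d assume m: "a \<in> A" "b \<in> A" "c \<in> A" "d \<in> A" and e: "(a+b) mod int M = (c+d) mod int M"
    obtain a0 where a0: "a0 \<in> A0" "a = int a0" using m(1) unfolding A_def by auto
    obtain b0 where b0: "b0 \<in> A0" "b = int b0" using m(2) unfolding A_def by auto
    obtain c0 where c0: "c0 \<in> A0" "c = int c0" using m(3) unfolding A_def by auto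
    obtain d0 where d0: "d0 \<in> A0" "d = int d0" using m(4) unfolding A_def by auto
    have "int ((a0+b0) mod M) = int ((c0+d0) mod M)"
      using e a0 b0 c0 d0 by (simp add: of_nat_mod)
    then have "(a0+b0) mod M = (c0+d0) mod M" by simp
    then have "{a0,b0} = {c0,d0}" using A0(3) a0 b0 c0 d0 by blast
    then show "{a,b} = {c,d}" using a0 b0 c0 d0 by (metis image_insert image_empty)
  qed
  define L where "L = min N M"
  have LM: "L \<le> M" unfolding L_def by simp
  have big: "card A * L > M * k"
  proof (cases "M \<le> N")
    case True
    then have "L = M" unfolding L_def by simp
    moreover have "M > 0" unfolding M_def using p3 by simp
    moreover have "p - 1 > k" using p by simp
    ultimately show ?thesis using cardA by (simp add: mult.commute)
  next
    case False
    then have LN: "L = N" unfolding L_def by simp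
    have "int p * int k \<le> (4 * int k - 4) * int k"
      using p k3 by (intro mult_right_mono) auto
    also have "\<dots> < (2 * int k - 1)^2" by (simp add: power2_eq_square algebra_simps)
    also have "\<dots> = int ((2*k - 1)^2)" using k3 by (simp add: of_nat_diff)
    also have "\<dots> \<le> int N" using sq by simp
    finally have "p * k < N" by (simp only: of_nat_mult[symmetric] of_nat_less_iff)
    then have "(p - 1) * (p * k) < (p - 1) * N" using p3 by simp
    then show ?thesis using cardA LN unfolding M_def by (simp add: algebra_simps)
  qed
  obtain B where B: "B \<subseteq> {1..int L}" "sidon B" "card B \<ge> k + 1"
    using window[OF subA cyc LM big] by blast
  have LN: "int L \<le> int N" unfolding L_def by simp
  have "B \<subseteq> {1..int N}"
  proof
    fix x assume "x \<in> B"
    then have "1 \<le> x" "x \<le> int L" using B(1) by auto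
    then show "x \<in> {1..int N}" using LN by simp
  qed
  then show ?thesis using B by blast
qed

theorem mainTheorem11:
  fixes N :: nat
  assumes "N \<ge> 5"
  shows "int (h N) > \<lfloor>(of_int \<lfloor>sqrt (real N)\<rfloor> + 1) / (2::real)\<rfloor>"
proof -
  define s where "s = \<lfloor>sqrt (real N)\<rfloor>"
  have "sqrt (real N) \<ge> 2"
  proof -
    have "sqrt (4::real) \<le> sqrt (real N)" using assms by (subst real_sqrt_le_iff) simp
    then show ?thesis by simp
  qed
  then have s2: "s \<ge> 2" unfolding s_def by linarith
  have "of_int s \<le> sqrt (real N)" unfolding s_def by simp
  then have "(of_int s)^2 \<le> (sqrt (real N))^2" using s2 by (intro power_mono) auto
  then have "real_of_int (s^2) \<le> real N" by simp
  then have sN: "s^2 \<le> int N" by linarith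
  define k where "k = (s + 1) div 2"
  have fl: "\<lfloor>(of_int s + 1) / (2::real)\<rfloor> = k"
  proof -
    have "(of_int s + 1) / (2::real) = of_int (s+1) / of_int 2" by simp
    then show ?thesis unfolding k_def by (simp only: floor_divide_of_int_eq)
  qed
  have k1: "k \<ge> 1" unfolding k_def using s2 by simp
  have ks: "2*k - 1 \<le> s" unfolding k_def by simp
  define k' where "k' = nat k"
  have kk: "int k' = k" unfolding k'_def using k1 by simp
  have "\<exists>B. B \<subseteq> {1..int N} \<and> sidon B \<and> card B \<ge> k' + 1"
  proof (cases "k' \<ge> 3")
    case True
    have "int ((2*k' - 1)^2) = (2*k - 1)^2" using kk True by (simp add: of_nat_diff)
    also have "\<dots> \<le> s^2" using ks k1 by (intro power_mono) auto
    also have "\<dots> \<le> int N" by (rule sN)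
    finally have "(2*k' - 1)^2 \<le> N" by (simp only: of_nat_le_iff)
    then show ?thesis by (rule big_case[OF True])
  next
    case False
    then have "k' = 1 \<or> k' = 2" using kk k1 by auto
    then show ?thesis
    proof
      assume "k' = 1"
      moreover have "{1, 2} \<subseteq> {1..int N}" using assms by auto
      ultimately show ?thesis using sidon_12 by (intro exI[of _ "{1,2}"]) auto
    next
      assume k2: "k' = 2"
      then have "s \<ge> 3" using kk unfolding k_def by simp
      then have "9 \<le> s^2" using power_mono[of 3 s 2] by simp
      then have "9 \<le> int N" using sN by simp
      then have "{1, 2, 4} \<subseteq> {1..int N}" by auto
      then show ?thesis using sidon_124 k2 by (intro exI[of _ "{1,2,4}"]) auto
    qed
  qed
  then obtain B where B: "B \<subseteq> {1..int N}" "sidon B" "card B \<ge> k' + 1" by blast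
  have "card B \<le> h N" by (rule h_ge[OF B(1,2)])
  then have "int (h N) \<ge> k + 1" using B(3) kk by linarith
  then have "\<lfloor>(of_int s + 1) / (2::real)\<rfloor> < int (h N)" using fl by linarith
  then show ?thesis unfolding s_def .
qed

end
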